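(* Let $R$ be a partially ordered commutative ring with $\mathbb{N}\subseteq\mathrm{Loc}(R)$, let $\varphi\in\mathcal{K}(R)$ and let $U$ be a neighbourhood of $\varphi$ in $\mathcal{K}(R)$. Then there exists $b\in R^{\mathrm{bd}}_{\mathrm{loc}}$ such that $\varphi\in\mathrm{O}_{b,]-\infty,0[}\subseteq U$, where $\mathrm{O}_{b,]-\infty,0[}=\{\psi\in\mathcal{K}(R):\psi(b)<0\}$.
   Context: Rings are commutative with unit; ring morphisms are unital. A partially ordered commutative ring is a commutative ring $R$ with partial order $\le$, $r\le s\Rightarrow r+t\le s+t$, positive cone $R^+$ closed under multiplication and containing all squares. $\mathbb{N}=\{1,2,\dots\}$, $\mathbb{N}_0=\mathbb{N}\cup\{0\}$. $\mathrm{Loc}(R)$ is the set of $s\in1+R^+$ such that $rs\in R^+$ implies $r\in R^+$ for all $r\in R$; $\mathbb{N}\subseteq\mathrm{Loc}(R)$ means $n\cdot1\in\mathrm{Loc}(R)$ for all $n$. $R_{\mathrm{loc}}$: fractions $r/s$ ($r\in R$, $s\in\mathrm{Loc}(R)$), $r/s=r'/s'$ iff $rs'=r's$, usual operations, ordered by $p/q\le r/s$ iff $ps\le rq$. $R^{\mathrm{bd}}_{\mathrm{loc}}=\{a\in R_{\mathrm{loc}}:\exists n\in\mathbb{N}_0,\ -n\le a\le n\}$, a subring. $\mathcal{K}(R)$ is the set of ring morphisms $\varphi\colon R^{\mathrm{bd}}_{\mathrm{loc}}\to\mathbb{R}$ with $\varphi(a)\ge0$ for all $a\ge 0$, with the topology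 generated by the subbasis of sets $\{\varphi:\varphi(a)\in V\}$, $a\in R^{\mathrm{bd}}_{\mathrm{loc}}$, $V\subseteq\mathbb{R}$ open. *)

theory Defs
  imports "HOL-Analysis.Analysis"
begin

class po_comm_ring = comm_ring_1 + order +
  assumes po_add_right_mono: "a \<le> b \<Longrightarrow> a + c \<le> b + c"
  assumes po_mult_nonneg: "0 \<le> a \<Longrightarrow> 0 \<le> b \<Longrightarrow> 0 \<le> a * b"
  assumes po_square_nonneg: "0 \<le> a * a"

definition pos_cone :: "'a::po_comm_ring set" where
  "pos_cone = {r. 0 \<le> r}"

definition Loc :: "'a::po_comm_ring set" where
  "Loc = {s. s - 1 \<in> pos_cone \<and> (\<forall>r. r * s \<in> pos_cone \<longrightarrow> r \<in> pos_cone)}"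

lemma Loc_one: "(1::'a::po_comm_ring) \<in> Loc"
  by (simp add: Loc_def pos_cone_def)

lemma Loc_nonneg:
  assumes "s \<in> Loc" shows "0 \<le> (s::'a::po_comm_ring)"
proof -
  have "0 \<le> s - 1" using assms by (simp add: Loc_def pos_cone_def)
  hence "0 + 1 \<le> s - 1 + 1" by (rule po_add_right_mono)
  moreover have "0 \<le> (1::'a)" using po_square_nonneg[of 1] by simp
  ultimately show ?thesis by simp
qed

lemma Loc_cancel:
  assumes "s \<in> Loc" "t * s = (0::'a::po_comm_ring)" shows "t = 0"
proof -
  have a: "0 \<le> t" using assms by (auto simp: Loc_def pos_cone_def)
  have "(- t) * s = 0" using assms by simp
  hence "0 \<le> - t" using assms by (auto simp: Loc_def pos_cone_def)
  hence "0 + t \<le> - t + t" by (rule po_add_right_mono)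
  hence "t \<le> 0" by simp
  with a show ?thesis by simp
qed

lemma Loc_mult:
  assumes "s \<in> Loc" "s' \<in> Loc" shows "s * s' \<in> (Loc::'a::po_comm_ring set)"
proof -
  have a: "0 \<le> s - 1" "0 \<le> s' - 1" using assms by (auto simp: Loc_def pos_cone_def)
  have "0 \<le> (s - 1) * (s' - 1)" using a po_mult_nonneg by blast
  hence "0 + (s - 1) \<le> (s - 1) * (s' - 1) + (s - 1)" by (rule po_add_right_mono)
  hence b: "0 \<le> (s - 1) * (s' - 1) + (s - 1)" using a order_trans by fastforce
  hence "0 + (s' - 1) \<le> (s - 1) * (s' - 1) + (s - 1) + (s' - 1)" by (rule po_add_right_mono)
  hence "0 \<le> (s - 1) * (s' - 1) + (s - 1) + (s' - 1)" using a order_trans by fastforce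
  moreover have "(s - 1) * (s' - 1) + (s - 1) + (s' - 1) = s * s' - 1" by (simp add: algebra_simps)
  ultimately have c: "0 \<le> s * s' - 1" by simp
  have "\<forall>r. 0 \<le> r * (s * s') \<longrightarrow> 0 \<le> r"
  proof (intro allI impI)
    fix r assume "0 \<le> r * (s * s')"
    hence "0 \<le> (r * s) * s'" by (simp add: mult.assoc)
    hence "0 \<le> r * s" using assms(2) by (auto simp: Loc_def pos_cone_def)
    thus "0 \<le> r" using assms(1) by (auto simp: Loc_def pos_cone_def)
  qed
  with c show ?thesis by (simp add: Loc_def pos_cone_def)
qed

definition frac_rel :: "'a::po_comm_ring \<times> 'a \<Rightarrow> 'a \<times> 'a \<Rightarrow> bool" where
  "frac_rel = (\<lambda>(r, s) (r', s'). s \<in> Loc \<and> s' \<in> Loc \<and> r * s' = r' * s)"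

lemma frac_rel_part_equivp: "part_equivp frac_rel"
proof (rule part_equivpI)
  show "\<exists>x. frac_rel x x" by (rule exI[of _ "(0, 1)"]) (simp add: frac_rel_def Loc_one)
  show "symp frac_rel" by (auto simp: symp_def frac_rel_def)
  show "transp frac_rel"
  proof (rule transpI)
    fix x y z assume "frac_rel x y" "frac_rel y z"
    then obtain r s r' s' r'' s'' where xyz: "x = (r, s)" "y = (r', s')" "z = (r'', s'')"
      and h: "s \<in> Loc" "s' \<in> Loc" "s'' \<in> Loc" "r * s' = r' * s" "r' * s'' = r'' * s'"
      by (cases x; cases y; cases z) (auto simp: frac_rel_def)
    have "(r * s'' - r'' * s) * s' = (r * s') * s'' - (r'' * s') * s" by (simp add: algebra_simps)
    also have "\<dots> = (r' * s'') * s - (r'' * s') * s" using h(4) by (simp add: algebra_simps)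
    also have "\<dots> = 0" using h(5) by simp
    finally have "r * s'' - r'' * s = 0" using Loc_cancel h(2) by blast
    thus "frac_rel x z" using xyz h by (simp add: frac_rel_def)
  qed
qed

quotient_type (overloaded) 'a rloc = "'a::po_comm_ring \<times> 'a" / partial: frac_rel
  by (rule frac_rel_part_equivp)

lift_definition rl_of :: "'a::po_comm_ring \<Rightarrow> 'a rloc" is "\<lambda>r. (r, 1)"
  by (simp add: frac_rel_def Loc_one)

lift_definition rl_add :: "'a::po_comm_ring rloc \<Rightarrow> 'a rloc \<Rightarrow> 'a rloc"
  is "\<lambda>(r, s) (r', s'). (r * s' + r' * s, s * s')"
  by (auto simp: frac_rel_def Loc_mult algebra_simps)
    (metis (no_types, lifting) mult.assoc mult.left_commute)

lift_definition rl_mult :: "'a::po_comm_ring rloc \<Rightarrow> 'a rloc \<Rightarrow> 'a rloc"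
  is "\<lambda>(r, s) (r', s'). (r * r', s * s')"
  by (auto simp: frac_rel_def Loc_mult algebra_simps)
    (metis (no_types, lifting) mult.assoc mult.left_commute)

lemma po_le_iff_nonneg: "(a::'a::po_comm_ring) \<le> b \<longleftrightarrow> 0 \<le> b - a"
proof
  assume "a \<le> b" hence "a + - a \<le> b + - a" by (rule po_add_right_mono) thus "0 \<le> b - a" by simp
next
  assume "0 \<le> b - a" hence "0 + a \<le> b - a + a" by (rule po_add_right_mono) thus "a \<le> b" by simp
qed

lemma Loc_nonneg_iff:
  assumes "t \<in> Loc" shows "0 \<le> x * t \<longleftrightarrow> 0 \<le> (x::'a::po_comm_ring)"
  using assms Loc_nonneg po_mult_nonneg by (auto simp: Loc_def pos_cone_def)

lemma rl_le_respects:
  assumes "frac_rel (p, q) (p', q')" "frac_rel (r, s) (r', s')"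
  shows "(p * s \<le> r * q) = (p' * s' \<le> r' * q')"
proof -
  have h: "q \<in> Loc" "q' \<in> Loc" "s \<in> Loc" "s' \<in> Loc" "p * q' = p' * q" "r * s' = r' * s"
    using assms by (auto simp: frac_rel_def)
  have e: "(r * q - p * s) * (q' * s') = (r' * q' - p' * s') * (q * s)"
  proof -
    have "(r * q - p * s) * (q' * s') = (r * s') * q * q' - (p * q') * s * s'" by (simp add: algebra_simps)
    also have "\<dots> = (r' * s) * q * q' - (p' * q) * s * s'" using h by simp
    also have "\<dots> = (r' * q' - p' * s') * (q * s)" by (simp add: algebra_simps)
    finally show ?thesis .
  qed
  have "(p * s \<le> r * q) = (0 \<le> (r * q - p * s) * (q' * s'))"
    using Loc_nonneg_iff[OF Loc_mult[OF h(2,4)]] po_le_iff_nonneg by blast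
  also have "\<dots> = (0 \<le> (r' * q' - p' * s') * (q * s))" using e by simp
  also have "\<dots> = (p' * s' \<le> r' * q')"
    using Loc_nonneg_iff[OF Loc_mult[OF h(1,3)]] po_le_iff_nonneg by blast
  finally show ?thesis .
qed

lift_definition rl_le :: "'a::po_comm_ring rloc \<Rightarrow> 'a rloc \<Rightarrow> bool"
  is "\<lambda>(p, q) (r, s). p * s \<le> r * q"
  using rl_le_respects by fastforce

definition Rbd :: "'a::po_comm_ring rloc set" where
  "Rbd = {a. \<exists>n::nat. rl_le (rl_of (- of_nat n)) a \<and> rl_le a (rl_of (of_nat n))}"

text \<open>K(R): positive unital ring morphisms R^bd_loc \<rightarrow> \<real>. Functions are represented as
  total functions on R_loc that vanish outside R^bd_loc (extensional convention).\<close>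
definition KR :: "('a::po_comm_ring rloc \<Rightarrow> real) set" where
  "KR = {\<phi>. (\<forall>a\<in>Rbd. \<forall>b\<in>Rbd. \<phi> (rl_add a b) = \<phi> a + \<phi> b)
            \<and> (\<forall>a\<in>Rbd. \<forall>b\<in>Rbd. \<phi> (rl_mult a b) = \<phi> a * \<phi> b)
            \<and> \<phi> (rl_of 1) = 1
            \<and> (\<forall>a\<in>Rbd. rl_le (rl_of 0) a \<longrightarrow> 0 \<le> \<phi> a)
            \<and> (\<forall>a. a \<notin> Rbd \<longrightarrow> \<phi> a = 0)}"

definition KR_topology :: "('a::po_comm_ring rloc \<Rightarrow> real) topology" where
  "KR_topology = topology_generated_by
     {{\<phi> \<in> KR. \<phi> a \<in> V} | a V. a \<in> Rbd \<and> open V}"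

definition O_neg :: "'a::po_comm_ring rloc \<Rightarrow> ('a rloc \<Rightarrow> real) set" where
  "O_neg b = {\<psi> \<in> KR. \<psi> b < 0}"

end

theory Submission imports Defs begin

context po_comm_ring begin
subclass ordered_comm_ring
proof
  fix a b c :: 'a
  assume "a \<le> b" thus "c + a \<le> c + b" using po_add_right_mono[of a b c] by (simp add: add.commute)
next
  fix a b c :: 'a
  assume "a \<le> b" "0 \<le> c"
  hence "0 \<le> b - a" using po_add_right_mono[of a b "-a"] by simp
  hence "0 \<le> c * (b - a)" using \<open>0 \<le> c\<close> po_mult_nonneg by blast
  hence "0 + c * a \<le> c * (b - a) + c * a" by (rule po_add_right_mono)
  thus "c * a \<le> c * b" by (simp add: algebra_simps)
qed
end

instantiation rloc :: (po_comm_ring) comm_ring_1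
begin
lift_definition uminus_rloc :: "'a rloc \<Rightarrow> 'a rloc" is "\<lambda>(r, s). (- r, s)"
  by (auto simp: frac_rel_def)
definition "plus_rloc = rl_add"
definition "times_rloc = rl_mult"
definition "zero_rloc = rl_of 0"
definition "one_rloc = rl_of 1"
definition minus_rloc :: "'a rloc \<Rightarrow> 'a rloc \<Rightarrow> 'a rloc" where "minus_rloc a b = rl_add a (- b)"
instance
proof
  fix a b c :: "'a rloc"
  show "a + b + c = a + (b + c)" unfolding plus_rloc_def
    by transfer (clarsimp simp: frac_rel_def Loc_mult; simp add: algebra_simps)
  show "a + b = b + a" unfolding plus_rloc_def
    by transfer (clarsimp simp: frac_rel_def Loc_mult; simp add: algebra_simps)
  show "0 + a = a" unfolding plus_rloc_def zero_rloc_def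
    by transfer (clarsimp simp: frac_rel_def Loc_mult Loc_one; simp add: algebra_simps)
  show "- a + a = 0" unfolding plus_rloc_def zero_rloc_def
    by transfer (clarsimp simp: frac_rel_def Loc_mult Loc_one; simp add: algebra_simps)
  show "a - b = a + - b" unfolding plus_rloc_def minus_rloc_def by simp
  show "a * b * c = a * (b * c)" unfolding times_rloc_def
    by transfer (clarsimp simp: frac_rel_def Loc_mult; simp add: algebra_simps)
  show "a * b = b * a" unfolding times_rloc_def
    by transfer (clarsimp simp: frac_rel_def Loc_mult; simp add: algebra_simps)
  show "1 * a = a" unfolding times_rloc_def one_rloc_def
    by transfer (clarsimp simp: frac_rel_def Loc_mult Loc_one; simp add: algebra_simps)
  show "(a + b) * c = a * c + b * c" unfolding times_rloc_def plus_rloc_def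
    by transfer (clarsimp simp: frac_rel_def Loc_mult; simp add: algebra_simps)
  show "(0::'a rloc) \<noteq> 1" unfolding zero_rloc_def one_rloc_def
    apply transfer apply (clarsimp simp: frac_rel_def Loc_one) done
qed
end

lemma fr_refl: "frac_rel (r, s) (r, s) \<longleftrightarrow> s \<in> Loc"
  by (simp add: frac_rel_def)

lemma plus_abs: "s \<in> Loc \<Longrightarrow> s' \<in> Loc \<Longrightarrow>
  abs_rloc (r, s) + abs_rloc (r', s') = abs_rloc (r * s' + r' * s, s * s')"
  unfolding plus_rloc_def by (simp add: rl_add.abs_eq fr_refl)

lemma times_abs: "s \<in> Loc \<Longrightarrow> s' \<in> Loc \<Longrightarrow>
  abs_rloc (r, s) * abs_rloc (r', s') = abs_rloc (r * r', s * s')"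
  unfolding times_rloc_def by (simp add: rl_mult.abs_eq fr_refl)

lemma uminus_abs: "s \<in> Loc \<Longrightarrow> - abs_rloc (r, s) = abs_rloc (- r, s)"
  by (simp add: uminus_rloc.abs_eq fr_refl)

lemma Rbd_abs: "s \<in> Loc \<Longrightarrow> abs_rloc (r, s) \<in> Rbd \<longleftrightarrow>
   (\<exists>n::nat. - of_nat n * s \<le> r \<and> r \<le> of_nat n * s)"
  unfolding Rbd_def by (simp add: rl_of.abs_eq rl_le.abs_eq fr_refl Loc_one)

lemma rloc_cases: obtains r s where "x = abs_rloc (r, s)" "s \<in> Loc"
  by (induct x rule: rloc.abs_induct) (auto simp: frac_rel_def)

lemma of_nat_nonneg_po: "0 \<le> (of_nat n :: 'a::po_comm_ring)"
proof (induct n)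
  case (Suc n)
  have "0 \<le> (1::'a)" using po_square_nonneg[of "1::'a"] by simp
  thus ?case using Suc add_mono[OF \<open>0 \<le> 1\<close> Suc] by simp
qed simp

lemma Rbd_add: assumes "a \<in> Rbd" "b \<in> Rbd" shows "a + b \<in> Rbd"
proof -
  obtain r s where a: "a = abs_rloc (r, s)" "s \<in> Loc" by (rule rloc_cases)
  obtain r' s' where b: "b = abs_rloc (r', s')" "s' \<in> Loc" by (rule rloc_cases)
  obtain n where n: "- of_nat n * s \<le> r" "r \<le> of_nat n * s" using assms a Rbd_abs by blast
  obtain m where m: "- of_nat m * s' \<le> r'" "r' \<le> of_nat m * s'" using assms b Rbd_abs by blast
  have s0: "0 \<le> s" "0 \<le> s'" using a b Loc_nonneg by auto
  have "- of_nat n * s * s' + - of_nat m * s' * s \<le> r * s' + r' * s"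
    by (intro add_mono mult_right_mono n m s0)
  moreover have "r * s' + r' * s \<le> of_nat n * s * s' + of_nat m * s' * s"
    by (intro add_mono mult_right_mono n m s0)
  ultimately have "- of_nat (n + m) * (s * s') \<le> r * s' + r' * s \<and> r * s' + r' * s \<le> of_nat (n + m) * (s * s')"
    by (simp add: algebra_simps)
  thus ?thesis using a b Loc_mult Rbd_abs plus_abs by metis
qed

lemma Rbd_uminus: assumes "a \<in> Rbd" shows "- a \<in> Rbd"
proof -
  obtain r s where a: "a = abs_rloc (r, s)" "s \<in> Loc" by (rule rloc_cases)
  obtain n where n: "- of_nat n * s \<le> r" "r \<le> of_nat n * s" using assms a Rbd_abs by blast
  have "- of_nat n * s \<le> - r \<and> - r \<le> of_nat n * s" using n by (simp add: le_minus_iff minus_le_iff)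
  thus ?thesis using a Rbd_abs uminus_abs by metis
qed

lemma Rbd_mult: assumes "a \<in> Rbd" "b \<in> Rbd" shows "a * b \<in> Rbd"
proof -
  obtain r s where a: "a = abs_rloc (r, s)" "s \<in> Loc" by (rule rloc_cases)
  obtain r' s' where b: "b = abs_rloc (r', s')" "s' \<in> Loc" by (rule rloc_cases)
  obtain n where n: "- of_nat n * s \<le> r" "r \<le> of_nat n * s" using assms a Rbd_abs by blast
  obtain m where m: "- of_nat m * s' \<le> r'" "r' \<le> of_nat m * s'" using assms b Rbd_abs by blast
  have s0: "0 \<le> s" "0 \<le> s'" using a b Loc_nonneg by auto
  define N where "N = of_nat n * s"
  define M where "M = of_nat m * s'"
  have N0: "0 \<le> N" "0 \<le> M" unfolding N_def M_def using s0 of_nat_nonneg_po by (auto intro: mult_nonneg_nonneg)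
  have n': "0 \<le> N - r" "0 \<le> N + r"
    using add_right_mono[OF n(1), of N] add_right_mono[OF n(2), of "-r"] unfolding N_def by (auto simp: algebra_simps)
  have m': "0 \<le> M - r'" "0 \<le> M + r'"
    using add_right_mono[OF m(1), of M] add_right_mono[OF m(2), of "-r'"] unfolding M_def by (auto simp: algebra_simps)
  have p1: "0 \<le> (N - r) * (M + r')" "0 \<le> (N + r) * (M - r')"
    "0 \<le> (N - r) * (M - r')" "0 \<le> (N + r) * (M + r')"
    using n' m' by (auto intro: mult_nonneg_nonneg)
  have q1: "0 \<le> N * (M - r')" "0 \<le> N * (M + r')" "0 \<le> (N - r) * M" "0 \<le> (N + r) * M"
    using n' m' N0 by (auto intro: mult_nonneg_nonneg)
  have "0 \<le> (N - r) * (M + r') + N * (M - r') + (N + r) * M"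
    using p1 q1 by (intro add_nonneg_nonneg) auto
  hence up: "r * r' \<le> 3 * (N * M)" by (simp add: algebra_simps)
  have "0 \<le> (N - r) * (M - r') + N * (M + r') + (N + r) * M"
    using p1 q1 by (intro add_nonneg_nonneg) auto
  hence "0 \<le> r * r' + 3 * (N * M)" by (simp add: algebra_simps)
  from add_right_mono[OF this, of "- (3 * (N * M))"]
  have lo: "- (3 * (N * M)) \<le> r * r'" by simp
  have NM: "N * M = of_nat (n * m) * (s * s')" unfolding N_def M_def by (simp add: algebra_simps)
  have "- of_nat (3 * (n * m)) * (s * s') \<le> r * r' \<and> r * r' \<le> of_nat (3 * (n * m)) * (s * s')"
    using up lo unfolding NM by (simp add: algebra_simps)
  thus ?thesis using a b Loc_mult Rbd_abs times_abs by metis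
qed

lemma zero_le_one_po: "(0::'a::po_comm_ring) \<le> 1"
  using po_square_nonneg[of "1::'a"] by simp

lemma Rbd_one: "(1::'a::po_comm_ring rloc) \<in> Rbd"
proof -
  have "- 1 \<le> (1::'a)" by (meson zero_le_one_po neg_le_0_iff_le order_trans)
  thus ?thesis unfolding one_rloc_def rl_of.abs_eq using Rbd_abs[OF Loc_one, of "1::'a"]
    by (auto intro!: exI[of _ 1])
qed

lemma Rbd_zero: "(0::'a::po_comm_ring rloc) \<in> Rbd"
  unfolding zero_rloc_def rl_of.abs_eq using Rbd_abs[OF Loc_one, of "0::'a"]
  by (auto intro!: exI[of _ 0])


lemma Rbd_diff: "a \<in> Rbd \<Longrightarrow> b \<in> Rbd \<Longrightarrow> a - b \<in> Rbd"
  using Rbd_add Rbd_uminus by (metis diff_conv_add_uminus)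

lemma Rbd_of_nat: "(of_nat n :: 'a::po_comm_ring rloc) \<in> Rbd"
  by (induct n) (auto intro: Rbd_add Rbd_zero Rbd_one)

lemma Rbd_of_int: "(of_int z :: 'a::po_comm_ring rloc) \<in> Rbd"
  by (cases z rule: int_cases2) (auto intro: Rbd_uminus Rbd_of_nat)

context
  fixes \<psi> :: "'a::po_comm_ring rloc \<Rightarrow> real"
  assumes K: "\<psi> \<in> KR"
begin

lemma K_add: "a \<in> Rbd \<Longrightarrow> b \<in> Rbd \<Longrightarrow> \<psi> (a + b) = \<psi> a + \<psi> b"
  using K unfolding KR_def plus_rloc_def by blast

lemma K_mult: "a \<in> Rbd \<Longrightarrow> b \<in> Rbd \<Longrightarrow> \<psi> (a * b) = \<psi> a * \<psi> b"
  using K unfolding KR_def times_rloc_def by blast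

lemma K_one: "\<psi> 1 = 1"
  using K unfolding KR_def one_rloc_def by blast

lemma K_zero: "\<psi> 0 = 0"
  using K_add[OF Rbd_zero Rbd_zero] by simp

lemma K_uminus: "a \<in> Rbd \<Longrightarrow> \<psi> (- a) = - \<psi> a"
  using K_add[OF _ Rbd_uminus, of a a] K_zero by simp

lemma K_diff: "a \<in> Rbd \<Longrightarrow> b \<in> Rbd \<Longrightarrow> \<psi> (a - b) = \<psi> a - \<psi> b"
  using K_add[OF _ Rbd_uminus, of a b] K_uminus[of b] by simp

lemma K_of_nat: "\<psi> (of_nat n) = real n"
  by (induct n) (auto simp: K_add Rbd_of_nat Rbd_one K_one K_zero)

lemma K_of_int: "\<psi> (of_int z) = real_of_int z"
  by (cases z rule: int_cases2) (auto simp: K_uminus Rbd_of_nat K_of_nat)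

lemma K_sum: "finite A \<Longrightarrow> (\<forall>a\<in>A. f a \<in> Rbd) \<Longrightarrow>
   sum f A \<in> Rbd \<and> \<psi> (sum f A) = (\<Sum>a\<in>A. \<psi> (f a))"
  by (induct A rule: finite_induct) (auto simp: K_add K_zero Rbd_zero Rbd_add)

end

lemma main_lemma:
  fixes \<phi> :: "'a::po_comm_ring rloc \<Rightarrow> real"
  assumes phi: "\<phi> \<in> KR" and A: "finite A" "A \<subseteq> Rbd" and e: "e > 0"
  shows "\<exists>b\<in>Rbd. \<phi> b < 0 \<and> (\<forall>\<psi>\<in>KR. \<psi> b < 0 \<longrightarrow> (\<forall>a\<in>A. \<bar>\<psi> a - \<phi> a\<bar> < e))"
proof -
  define k where "k = card A"
  obtain n :: nat where n: "real k + 2 < real n * e" using ex_less_of_nat_mult[OF e] by blast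
  define p where "p a = round (real n * \<phi> a)" for a
  define c where "c a = (of_nat n :: 'a rloc) * a - of_int (p a)" for a
  define b where "b = (\<Sum>a\<in>A. c a * c a) - of_nat (k + 1)"
  have cR: "c a * c a \<in> Rbd" if "a \<in> A" for a
  proof -
    have aR: "a \<in> Rbd" using that A by blast
    have "c a \<in> Rbd" unfolding c_def by (rule Rbd_diff[OF Rbd_mult[OF Rbd_of_nat aR] Rbd_of_int])
    thus ?thesis using Rbd_mult by blast
  qed
  have bR: "b \<in> Rbd" unfolding b_def using K_sum[OF phi A(1), of "\<lambda>a. c a * c a"] cR
    by (intro Rbd_diff Rbd_of_nat) auto
  have val: "\<psi> b = (\<Sum>a\<in>A. (real n * \<psi> a - p a)^2) - (real k + 1)" if psi: "\<psi> \<in> KR" for \<psi>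
  proof -
    have "\<psi> (c a * c a) = (real n * \<psi> a - p a)^2" if "a \<in> A" for a
    proof -
      have aR: "a \<in> Rbd" using that A by blast
      have "\<psi> (c a) = real n * \<psi> a - p a" unfolding c_def
        using K_diff[OF psi Rbd_mult[OF Rbd_of_nat aR] Rbd_of_int] K_mult[OF psi Rbd_of_nat aR]
          K_of_nat[OF psi] K_of_int[OF psi] by simp
      moreover have "c a \<in> Rbd" unfolding c_def by (rule Rbd_diff[OF Rbd_mult[OF Rbd_of_nat aR] Rbd_of_int])
      ultimately show ?thesis using K_mult[OF psi] by (simp add: power2_eq_square)
    qed
    hence eq: "(\<Sum>a\<in>A. \<psi> (c a * c a)) = (\<Sum>a\<in>A. (real n * \<psi> a - p a)^2)"
      by (rule sum.cong[OF refl])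
    have S: "(\<Sum>a\<in>A. c a * c a) \<in> Rbd" and hS: "\<psi> (\<Sum>a\<in>A. c a * c a) = (\<Sum>a\<in>A. \<psi> (c a * c a))"
      using K_sum[OF psi A(1), of "\<lambda>a. c a * c a"] cR by (simp_all add: Ball_def)
    show ?thesis unfolding b_def K_diff[OF psi S Rbd_of_nat] K_of_nat[OF psi] hS eq by simp
  qed
  have "\<phi> b < 0"
  proof -
    have "(real n * \<phi> a - p a)^2 \<le> 1" for a
    proof -
      have "\<bar>real n * \<phi> a - p a\<bar> \<le> 1/2" unfolding p_def using of_int_round_abs_le[of "real n * \<phi> a"] by linarith
      hence "\<bar>real n * \<phi> a - p a\<bar>^2 \<le> 1^2" by (intro power_mono) auto
      thus ?thesis by simp
    qed
    hence "(\<Sum>a\<in>A. (real n * \<phi> a - p a)^2) \<le> real k * 1" unfolding k_def by (intro sum_bounded_above) auto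
    thus ?thesis using val[OF phi] by simp
  qed
  moreover have "\<bar>\<psi> a - \<phi> a\<bar> < e" if psi: "\<psi> \<in> KR" and neg: "\<psi> b < 0" and a: "a \<in> A" for \<psi> a
  proof -
    have "(real n * \<psi> a - p a)^2 \<le> (\<Sum>a\<in>A. (real n * \<psi> a - p a)^2)"
      by (rule member_le_sum[OF a]) (auto simp: A)
    hence sq: "(real n * \<psi> a - p a)^2 < real k + 1" using val[OF psi] neg by simp
    have l1: "\<bar>real n * \<psi> a - p a\<bar> < real k + 1"
    proof (rule ccontr)
      assume "\<not> ?thesis"
      hence "real k + 1 \<le> \<bar>real n * \<psi> a - p a\<bar>" by simp
      hence "(real k + 1)^2 \<le> \<bar>real n * \<psi> a - p a\<bar>^2"
        by (intro power_mono) auto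
      moreover have "real k + 1 \<le> (real k + 1)^2" by (simp add: power2_eq_square)
      ultimately show False using sq by simp
    qed
    have l2: "\<bar>real n * \<phi> a - p a\<bar> \<le> 1/2" unfolding p_def using of_int_round_abs_le[of "real n * \<phi> a"] by linarith
    have "real n * \<bar>\<psi> a - \<phi> a\<bar> = \<bar>(real n * \<psi> a - p a) - (real n * \<phi> a - p a)\<bar>"
    proof -
      have "real n * \<bar>\<psi> a - \<phi> a\<bar> = \<bar>real n * (\<psi> a - \<phi> a)\<bar>" by (simp add: abs_mult)
      thus ?thesis by (simp add: right_diff_distrib)
    qed
    also have "\<dots> < real k + 2" using l1 l2 by linarith
    also have "\<dots> < real n * e" by (rule n)
    finally have lt: "real n * \<bar>\<psi> a - \<phi> a\<bar> < real n * e" .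
    have "0 < real n" using n e by (cases n) auto
    thus ?thesis using lt by simp
  qed
  ultimately show ?thesis using bR by blast
qed


lemma gen_nbhd:
  assumes "generate_topology_on {{\<phi> \<in> KR. \<phi> a \<in> V} | a V. a \<in> (Rbd :: 'a::po_comm_ring rloc set) \<and> open V} W"
  shows "\<forall>\<phi>\<in>W \<inter> KR. \<exists>A e. finite A \<and> A \<subseteq> Rbd \<and> e > 0 \<and>
           {\<psi>\<in>KR. \<forall>a\<in>A. \<bar>\<psi> a - \<phi> a\<bar> < e} \<subseteq> W"
  using assms
proof (induction rule: generate_topology_on.induct)
  case Empty
  then show ?case by simp
next
  case (Int W1 W2)
  show ?case
  proof
    fix \<phi> assume "\<phi> \<in> W1 \<inter> W2 \<inter> KR"
    hence i1: "\<phi> \<in> W1 \<inter> KR" and i2: "\<phi> \<in> W2 \<inter> KR" by auto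
    obtain A1 e1 where h1: "finite A1" "A1 \<subseteq> Rbd" "e1 > 0" "{\<psi>\<in>KR. \<forall>a\<in>A1. \<bar>\<psi> a - \<phi> a\<bar> < e1} \<subseteq> W1"
      using bspec[OF Int.IH(1) i1] by (elim exE conjE) 
    obtain A2 e2 where h2: "finite A2" "A2 \<subseteq> Rbd" "e2 > 0" "{\<psi>\<in>KR. \<forall>a\<in>A2. \<bar>\<psi> a - \<phi> a\<bar> < e2} \<subseteq> W2"
      using bspec[OF Int.IH(2) i2] by (elim exE conjE) 
    have h: "finite A1" "A1 \<subseteq> Rbd" "e1 > 0" "{\<psi>\<in>KR. \<forall>a\<in>A1. \<bar>\<psi> a - \<phi> a\<bar> < e1} \<subseteq> W1"
      "finite A2" "A2 \<subseteq> Rbd" "e2 > 0" "{\<psi>\<in>KR. \<forall>a\<in>A2. \<bar>\<psi> a - \<phi> a\<bar> < e2} \<subseteq> W2"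
      using h1 h2 by auto
    show "\<exists>A e. finite A \<and> A \<subseteq> Rbd \<and> e > 0 \<and>
           {\<psi>\<in>KR. \<forall>a\<in>A. \<bar>\<psi> a - \<phi> a\<bar> < e} \<subseteq> W1 \<inter> W2"
      using h by (intro exI[of _ "A1 \<union> A2"] exI[of _ "min e1 e2"]) auto
  qed
next
  case (UN K)
  show ?case
  proof
    fix \<phi> assume "\<phi> \<in> \<Union>K \<inter> KR"
    then obtain k where "k \<in> K" "\<phi> \<in> k \<inter> KR" by blast
    obtain A e where h: "finite A" "A \<subseteq> Rbd" "e > 0" "{\<psi>\<in>KR. \<forall>a\<in>A. \<bar>\<psi> a - \<phi> a\<bar> < e} \<subseteq> k"
      using bspec[OF UN.IH[OF \<open>k \<in> K\<close>] \<open>\<phi> \<in> k \<inter> KR\<close>] by (elim exE conjE)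
    have "k \<subseteq> \<Union>K" using \<open>k \<in> K\<close> by blast
    thus "\<exists>A e. finite A \<and> A \<subseteq> Rbd \<and> e > 0 \<and>
           {\<psi>\<in>KR. \<forall>a\<in>A. \<bar>\<psi> a - \<phi> a\<bar> < e} \<subseteq> \<Union>K" using h by (intro exI conjI) auto
  qed
next
  case (Basis s)
  then obtain a V where s: "s = {\<phi> \<in> KR. \<phi> a \<in> V}" "a \<in> Rbd" "open V" by blast
  show ?case
  proof
    fix \<phi> assume "\<phi> \<in> s \<inter> KR"
    hence "\<phi> a \<in> V" using s by blast
    then obtain e where e: "e > 0" "\<And>y. dist y (\<phi> a) < e \<Longrightarrow> y \<in> V"
      using s(3) open_dist by metis
    show "\<exists>A e. finite A \<and> A \<subseteq> Rbd \<and> e > 0 \<and>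
           {\<psi>\<in>KR. \<forall>a\<in>A. \<bar>\<psi> a - \<phi> a\<bar> < e} \<subseteq> s"
      using e s by (intro exI[of _ "{a}"] exI[of _ e]) (auto simp: dist_real_def)
  qed
qed

theorem proposition21:
  fixes \<phi> :: "'a::po_comm_ring rloc \<Rightarrow> real" and U :: "('a rloc \<Rightarrow> real) set"
  assumes N_Loc: "\<forall>n::nat. n \<ge> 1 \<longrightarrow> (of_nat n :: 'a) \<in> Loc"
    and phi: "\<phi> \<in> KR"
    and nbhd: "U \<subseteq> topspace KR_topology"
    and nbhd': "\<exists>W. openin KR_topology W \<and> \<phi> \<in> W \<and> W \<subseteq> U"
  shows "\<exists>b\<in>Rbd. \<phi> \<in> O_neg b \<and> O_neg b \<subseteq> U"
proof -
  obtain W where W: "openin KR_topology W" "\<phi> \<in> W" "W \<subseteq> U" using nbhd' by blast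
  have G: "generate_topology_on {{\<phi> \<in> KR. \<phi> a \<in> V} | a V. a \<in> (Rbd :: 'a rloc set) \<and> open V} W"
    using W(1) unfolding KR_topology_def by (rule openin_topology_generated_by)
  have "\<phi> \<in> W \<inter> KR" using W(2) phi by blast
  from bspec[OF gen_nbhd[OF G] \<open>\<phi> \<in> W \<inter> KR\<close>] obtain A e where
    Ae: "finite A" "A \<subseteq> Rbd" "e > 0" "{\<psi>\<in>KR. \<forall>a\<in>A. \<bar>\<psi> a - \<phi> a\<bar> < e} \<subseteq> W"
    by (elim exE conjE)
  obtain b where b: "b \<in> Rbd" "\<phi> b < 0" "\<forall>\<psi>\<in>KR. \<psi> b < 0 \<longrightarrow> (\<forall>a\<in>A. \<bar>\<psi> a - \<phi> a\<bar> < e)"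
    using main_lemma[OF phi Ae(1,2,3)] by blast
  have "O_neg b \<subseteq> W" using b(3) Ae(4) unfolding O_neg_def by blast
  moreover have "\<phi> \<in> O_neg b" using phi b(2) unfolding O_neg_def by blast
  ultimately show ?thesis using b(1) W(3) by blast
qed

end
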